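(* Let $n\geqslant 1$ and $r\geqslant 1$ be integers and let $S$ be a set of real $n\times n$ matrices, each of rank $r$, such that there exists $N$ with the property that every product $M_1M_2\cdots M_\ell$ with $\ell\geqslant N$ and $M_i\in S$ has rank at most $r-1$. Then every product $M_1M_2\cdots M_{2^{n+1}}$ of $2^{n+1}$ elements $M_i\in S$ has rank at most $r-1$. *)

theory Defs
  imports "HOL-Analysis.Analysis"
begin

text \<open>Product M_1 M_2 ... M_l of a list of square matrices (empty product = identity).\<close>
definition mat_list_prod :: "(real^'n^'n) list \<Rightarrow> real^'n^'n" where
  "mat_list_prod ms = foldr (\<lambda>A B. A ** B) ms (mat 1)"

end

theory Submission
  imports Defs
begin

lemma mlp_Cons: "mat_list_prod (A # xs) = A ** mat_list_prod xs"
  by (simp add: mat_list_prod_def)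
lemma mlp_Nil: "mat_list_prod [] = mat 1"
  by (simp add: mat_list_prod_def)
lemma mlp_append: "mat_list_prod (xs @ ys) = mat_list_prod xs ** mat_list_prod ys"
  by (induction xs) (auto simp: mlp_Cons mlp_Nil matrix_mul_assoc matrix_mul_lid)

lemma range_mult: "range ((*v) (A ** B)) = (*v) A ` range ((*v) (B::real^'n^'n))"
  by (auto simp: matrix_vector_mul_assoc image_iff)

lemma subspace_range: "subspace (range ((*v) (A::real^'n^'n)))"
  by (simp add: linear_subspace_image matrix_vector_mul_linear)

lemma range_mult_eq:
  fixes A B :: "real^'n^'n"
  assumes "rank (A ** B) \<ge> rank A"
  shows "range ((*v) (A ** B)) = range ((*v) A)"
proof -
  have "range ((*v) (A ** B)) \<subseteq> range ((*v) A)"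
    by (metis image_subsetI matrix_vector_mul_assoc rangeI)
  then show ?thesis using subspace_dim_equal[OF subspace_range subspace_range] assms
    by (simp add: rank_dim_range)
qed

lemma chain_range:
  fixes a :: "nat \<Rightarrow> real^'n^'n"
  assumes "\<forall>t<m. rank (a t) = r" "\<forall>t. Suc t < m \<longrightarrow> rank (a t ** a (Suc t)) \<ge> r" "k < m"
  shows "range ((*v) (mat_list_prod (map a [k..<m]))) = range ((*v) (a k))"
  using assms(3)
proof (induction "m - k" arbitrary: k)
  case 0
  then show ?case by simp
next
  case (Suc d)
  show ?case
  proof (cases "Suc k = m")
    case True
    have "[k..<m] = [k]" using True[symmetric] by simp
    then show ?thesis by (simp add: mlp_Cons mlp_Nil)
  next
    case False
    then have km: "Suc k < m" using Suc by simp
    have IH: "range ((*v) (mat_list_prod (map a [Suc k..<m]))) = range ((*v) (a (Suc k)))"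
      using Suc km by simp
    have "[k..<m] = k # [Suc k..<m]" using Suc by (simp add: upt_conv_Cons)
    then have "range ((*v) (mat_list_prod (map a [k..<m]))) = (*v) (a k) ` range ((*v) (a (Suc k)))"
      by (simp add: mlp_Cons range_mult IH)
    also have "\<dots> = range ((*v) (a k ** a (Suc k)))" by (simp add: range_mult)
    also have "\<dots> = range ((*v) (a k))"
      using range_mult_eq[of "a k" "a (Suc k)"] assms km Suc by auto
    finally show ?thesis .
  qed
qed

lemma chain_rank:
  fixes a :: "nat \<Rightarrow> real^'n^'n"
  assumes "\<forall>t<m. rank (a t) = r" "\<forall>t. Suc t < m \<longrightarrow> rank (a t ** a (Suc t)) \<ge> r" "0 < m"
  shows "rank (mat_list_prod (map a [0..<m])) = r"
  using chain_range[OF assms] assms by (simp add: rank_dim_range)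


lemma ker_dim:
  fixes B :: "real^'n^'n"
  shows "dim {x. B *v x = 0} = CARD('n) - rank B"
proof -
  have eq: "{y \<in> UNIV. \<forall>x \<in> span (rows B). orthogonal x y} = {x. B *v x = 0}"
  proof (safe)
    fix y assume h: "\<forall>x\<in>span (rows B). orthogonal x y"
    have "\<And>i. B $ i \<bullet> y = 0"
    proof -
      fix i
      have "row i B \<in> rows B" by (auto simp: rows_def)
      then have "orthogonal (row i B) y" using h span_base by blast
      moreover have "row i B = B $ i" by (simp add: row_def vec_eq_iff)
      ultimately show "B $ i \<bullet> y = 0" by (simp add: orthogonal_def)
    qed
    then show "B *v y = 0" by (simp add: matrix_mult_dot vec_eq_iff)
  next
    fix y x assume y: "B *v y = 0" and x: "x \<in> span (rows B)"
    have "orthogonal y x" if xr: "x \<in> rows B" for x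
    proof -
      obtain i where "x = row i B" using xr unfolding rows_def by blast
      moreover have "row i B = B $ i" by (simp add: row_def vec_eq_iff)
      moreover have "B $ i \<bullet> y = 0" using y by (simp add: matrix_mult_dot vec_eq_iff)
      ultimately show ?thesis by (simp add: orthogonal_def inner_commute)
    qed
    then have "orthogonal y x" using orthogonal_to_span[OF x] by blast
    then show "orthogonal x y" by (simp add: orthogonal_commute)
  qed simp
  have "dim {y \<in> UNIV. \<forall>x \<in> span (rows B). orthogonal x y} + dim (span (rows B)) = dim (UNIV :: (real^'n) set)"
    by (rule dim_subspace_orthogonal_to_vectors) auto
  then show ?thesis unfolding eq by (simp add: row_rank_def)
qed

lemma basis_indexed:
  fixes V :: "(real^'n) set" and I :: "'i set"
  assumes "subspace V" "finite I" "card I = dim V"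
  obtains u where "inj_on u I" "independent (u ` I)" "span (u ` I) = V"
proof -
  obtain Bs where Bs: "Bs \<subseteq> V" "independent Bs" "V \<subseteq> span Bs" "card Bs = dim V"
    using basis_exists by blast
  have "finite Bs" using Bs(2) independent_bound_general by blast
  then obtain h where h: "bij_betw h I Bs" using finite_same_card_bij assms Bs by metis
  have "span Bs = V" using span_subspace Bs assms by blast
  then show ?thesis using that[of h] h Bs by (auto simp: bij_betw_def)
qed

lemma indep_sum_zero:
  fixes u :: "'i \<Rightarrow> real^'n"
  assumes "inj_on u I" "finite I" "independent (u ` I)" "(\<Sum>k\<in>I. c k *\<^sub>R u k) = 0" "k \<in> I"
  shows "c k = 0"
proof (rule ccontr)
  assume ck: "c k \<noteq> 0"
  let ?a = "\<lambda>v. c (inv_into I u v)"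
  have fin: "finite (u ` I)" using assms(2) by simp
  have "(\<Sum>v\<in>u ` I. ?a v *\<^sub>R v) = (\<Sum>k\<in>I. ?a (u k) *\<^sub>R u k)"
    by (rule sum.reindex[OF assms(1), of "\<lambda>v. ?a v *\<^sub>R v", unfolded comp_def])
  also have "\<dots> = (\<Sum>k\<in>I. c k *\<^sub>R u k)"
    by (rule sum.cong) (simp_all add: inv_into_f_f[OF assms(1)])
  finally have eq: "(\<Sum>v\<in>u ` I. ?a v *\<^sub>R v) = 0" using assms(4) by simp
  have "?a (u k) \<noteq> 0" using ck by (simp add: inv_into_f_f[OF assms(1) assms(5)])
  then have "\<exists>v\<in>u ` I. ?a v \<noteq> 0" using assms(5) by blast
  then have "dependent (u ` I)" unfolding dependent_finite[OF fin]
    by (intro exI[of _ ?a] conjI eq)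
  then show False using assms(3) by blast
qed

lemma span_indexed:
  fixes u :: "'i \<Rightarrow> real^'n"
  assumes "inj_on u I" "finite I" "x \<in> span (u ` I)"
  obtains c where "x = (\<Sum>k\<in>I. c k *\<^sub>R u k)"
proof -
  have fin: "finite (u ` I)" using assms(2) by simp
  obtain a where "x = (\<Sum>v\<in>u ` I. a v *\<^sub>R v)"
    using assms(3) unfolding span_finite[OF fin] by blast
  also have "\<dots> = (\<Sum>k\<in>I. a (u k) *\<^sub>R u k)"
    by (rule sum.reindex[OF assms(1), of "\<lambda>v. a v *\<^sub>R v", unfolded comp_def])
  finally show ?thesis by (rule that)
qed
lemma rank_crit:
  fixes A B :: "real^'n^'n"
  assumes "rank A = r"
  shows "rank (B ** A) \<ge> r \<longleftrightarrow> (\<forall>x\<in>range ((*v) A). B *v x = 0 \<longrightarrow> x = 0)"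
proof
  assume h: "\<forall>x\<in>range ((*v) A). B *v x = 0 \<longrightarrow> x = 0"
  have inj0: "inj_on ((*v) B) (range ((*v) A))"
    using linear_inj_on_iff_eq_0[OF matrix_vector_mul_linear subspace_range] h by blast
  have sp: "span (range ((*v) A)) = range ((*v) A)" by (rule span_eq_iff[THEN iffD2, OF subspace_range])
  have inj: "inj_on ((*v) B) (span (range ((*v) A)))" by (subst sp) (rule inj0)
  have "rank (B ** A) = dim ((*v) B ` range ((*v) A))" by (simp add: rank_dim_range range_mult)
  also have "\<dots> = dim (range ((*v) A))"
    by (rule dim_image_eq[OF matrix_vector_mul_linear inj])
  finally show "rank (B ** A) \<ge> r" using assms by (simp add: rank_dim_range)
next
  assume h: "rank (B ** A) \<ge> r"
  show "\<forall>x\<in>range ((*v) A). B *v x = 0 \<longrightarrow> x = 0"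
  proof (rule ccontr)
    assume "\<not> ?thesis"
    then obtain x where x: "x \<in> range ((*v) A)" "B *v x = 0" "x \<noteq> 0" by blast
    let ?V = "range ((*v) A)"
    have x1: "{x} \<subseteq> ?V" using x(1) by simp
    have x2: "independent {x}" using x(3) independent_empty by (intro independent_insertI) (auto simp: span_empty)
    obtain Bs where Bs: "{x} \<subseteq> Bs" "Bs \<subseteq> ?V" "independent Bs" "?V \<subseteq> span Bs"
      by (rule maximal_independent_subset_extend[OF x1 x2])
    have fin: "finite Bs" by (rule finiteI_independent[OF Bs(3)])
    have spanBs: "span Bs = ?V" by (rule span_subspace[OF Bs(2) Bs(4) subspace_range])
    have xB: "x \<in> Bs" using Bs(1) by simp
    have "card Bs = dim Bs" using dim_eq_card_independent[OF Bs(3)] by simp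
    also have "\<dots> = dim (span Bs)" by (simp only: dim_span)
    also have "\<dots> = r" using spanBs assms by (simp add: rank_dim_range)
    finally have cardBs: "card Bs = r" .
    have "range ((*v) (B ** A)) = (*v) B ` span Bs" by (simp add: range_mult spanBs)
    also have "\<dots> = span ((*v) B ` Bs)" by (simp add: span_linear_image matrix_vector_mul_linear)
    also have "(*v) B ` Bs = insert 0 ((*v) B ` (Bs - {x}))" using xB x by auto
    finally have R: "range ((*v) (B ** A)) = span ((*v) B ` (Bs - {x}))" by simp
    have "rank (B ** A) \<le> card ((*v) B ` (Bs - {x}))"
      unfolding rank_dim_range R by (rule dim_le_card[OF subset_refl]) (simp add: fin)
    also have "\<dots> \<le> card (Bs - {x})" by (rule card_image_le) (simp add: fin)
    also have "\<dots> = r - 1" using cardBs xB fin by simp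
    finally have "rank (B ** A) \<le> r - 1" .
    moreover have "r \<ge> 1" using cardBs xB fin by (metis One_nat_def Suc_leI card_gt_0_iff empty_iff)
    ultimately show False using h by linarith
  qed
qed


definition Dm :: "'n set \<Rightarrow> ('n \<Rightarrow> real^'n) \<Rightarrow> ('n \<Rightarrow> real^'n) \<Rightarrow> real^'n^'n" where
  "Dm R u w = (\<chi> k. if k \<in> R then u k else w k)"

definition Fd :: "'n::finite set \<Rightarrow> ('n \<Rightarrow> real^'n) \<Rightarrow> ('n \<Rightarrow> real^'n) \<Rightarrow> real" where
  "Fd R u w = det (Dm R u w)"

lemma row_Dm: "row k (Dm R u w) = (if k \<in> R then u k else w k)"
  by (simp add: Dm_def row_def vec_eq_iff)

lemma sum_split_Compl:
  fixes f :: "'n::finite \<Rightarrow> 'a::comm_monoid_add"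
  shows "sum f UNIV = sum f R + sum f (- R)"
proof -
  have "UNIV = R \<union> (- R)" by auto
  then have "sum f UNIV = sum f (R \<union> (- R))" by simp
  also have "\<dots> = sum f R + sum f (- R)" by (rule sum.union_disjoint) auto
  finally show ?thesis .
qed

lemma rows_comb:
  "(\<Sum>k\<in>UNIV. c k *s row k (Dm R u w)) = (\<Sum>k\<in>R. c k *\<^sub>R u k) + (\<Sum>k\<in>-R. c k *\<^sub>R w k)"
proof -
  have "(\<Sum>k\<in>UNIV. c k *s row k (Dm R u w)) = (\<Sum>k\<in>R. c k *s row k (Dm R u w)) + (\<Sum>k\<in>-R. c k *s row k (Dm R u w))"
    by (rule sum_split_Compl)
  also have "(\<Sum>k\<in>R. c k *s row k (Dm R u w)) = (\<Sum>k\<in>R. c k *\<^sub>R u k)"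
    by (rule sum.cong) (simp_all add: row_Dm scalar_mult_eq_scaleR)
  also have "(\<Sum>k\<in>-R. c k *s row k (Dm R u w)) = (\<Sum>k\<in>-R. c k *\<^sub>R w k)"
    by (rule sum.cong) (simp_all add: row_Dm scalar_mult_eq_scaleR)
  finally show ?thesis .
qed

lemma det_nz_rows:
  fixes D :: "real^'n^'n"
  shows "det D \<noteq> 0 \<longleftrightarrow> (\<forall>c. (\<Sum>k\<in>UNIV. c k *s row k D) = 0 \<longrightarrow> (\<forall>k. c k = 0))"
  by (simp add: invertible_det_nz[symmetric] invertible_right_inverse matrix_right_invertible_independent_rows)

lemma Fd_zero:
  fixes u w :: "'n::finite \<Rightarrow> real^'n"
  assumes "inj_on u R" "inj_on w (-R)" "x \<noteq> 0" "x \<in> span (u ` R)" "x \<in> span (w ` (-R))"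
  shows "Fd R u w = 0"
proof -
  obtain a where a: "x = (\<Sum>k\<in>R. a k *\<^sub>R u k)" using span_indexed[OF assms(1) _ assms(4)] by auto
  obtain b where b: "x = (\<Sum>k\<in>-R. b k *\<^sub>R w k)" using span_indexed[OF assms(2) _ assms(5)] by auto
  define c where "c k = (if k \<in> R then a k else - b k)" for k
  have "(\<Sum>k\<in>R. c k *\<^sub>R u k) = x" unfolding a by (rule sum.cong) (simp_all add: c_def)
  moreover have "(\<Sum>k\<in>-R. c k *\<^sub>R w k) = - x" unfolding b
    by (simp add: c_def sum_negf[symmetric])
  ultimately have "(\<Sum>k\<in>UNIV. c k *s row k (Dm R u w)) = 0" by (simp add: rows_comb)
  moreover have "\<exists>k. c k \<noteq> 0"
  proof (rule ccontr)
    assume "\<not> ?thesis"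
    then have "\<forall>k\<in>R. a k = 0" by (simp add: c_def) (metis)
    then have "x = 0" unfolding a by simp
    then show False using assms(3) by simp
  qed
  ultimately show ?thesis unfolding Fd_def using det_nz_rows by blast
qed

lemma Fd_nz:
  fixes u w :: "'n::finite \<Rightarrow> real^'n"
  assumes "inj_on u R" "independent (u ` R)" "inj_on w (-R)" "independent (w ` (-R))"
    "\<And>x. x \<in> span (u ` R) \<Longrightarrow> x \<in> span (w ` (-R)) \<Longrightarrow> x = 0"
  shows "Fd R u w \<noteq> 0"
  unfolding Fd_def det_nz_rows
proof (intro allI impI)
  fix c :: "'n \<Rightarrow> real" and k
  assume "(\<Sum>k\<in>UNIV. c k *s row k (Dm R u w)) = 0"
  then have e: "(\<Sum>k\<in>R. c k *\<^sub>R u k) + (\<Sum>k\<in>-R. c k *\<^sub>R w k) = 0" by (simp add: rows_comb)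
  let ?y = "\<Sum>k\<in>R. c k *\<^sub>R u k"
  have y1: "?y \<in> span (u ` R)"
    by (intro span_sum span_scale span_base) simp
  have "?y = - (\<Sum>k\<in>-R. c k *\<^sub>R w k)" using e by (simp add: eq_neg_iff_add_eq_0)
  moreover have "(\<Sum>k\<in>-R. c k *\<^sub>R w k) \<in> span (w ` (-R))"
    by (intro span_sum span_scale span_base) simp
  ultimately have y2: "?y \<in> span (w ` (-R))" by (simp add: span_neg)
  have y0: "?y = 0" using assms(5)[OF y1 y2] .
  then have z: "(\<Sum>k\<in>-R. c k *\<^sub>R w k) = 0" using e by simp
  show "c k = 0"
  proof (cases "k \<in> R")
    case True
    then show ?thesis using indep_sum_zero[OF assms(1) _ assms(2) y0] by simp
  next
    case False
    then show ?thesis using indep_sum_zero[OF assms(3) _ assms(4) z] by simp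
  qed
qed


definition Gc :: "'n::finite set \<Rightarrow> 'n \<Rightarrow> ('n \<Rightarrow> 'n) \<Rightarrow> ('n \<Rightarrow> real^'n) \<Rightarrow> real" where
  "Gc R m0 f w = (if \<forall>k\<in>R. f k = m0 then (\<Prod>k\<in>-R. w k $ f k) else 0)"

lemma prod_split_Compl:
  fixes f :: "'n::finite \<Rightarrow> 'a::comm_monoid_mult"
  shows "prod f UNIV = prod f R * prod f (- R)"
proof -
  have "UNIV = R \<union> (- R)" by auto
  then have "prod f UNIV = prod f (R \<union> (- R))" by simp
  also have "\<dots> = prod f R * prod f (- R)" by (rule prod.union_disjoint) auto
  finally show ?thesis .
qed

lemma Fd_expand:
  fixes u w :: "'n::finite \<Rightarrow> real^'n"
  shows "Fd R u w = (\<Sum>f\<in>UNIV. Gc R m0 f w * Fd R u (\<lambda>k. axis (f k) 1))"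
proof -
  define a where "a k m = (if k \<in> R then (if m = m0 then u k else 0) else (w k $ m) *s axis m (1::real))"
    for k m
  have rowsum: "(\<Sum>m\<in>UNIV. a k m) = (if k \<in> R then u k else w k)" for k
  proof (cases "k \<in> R")
    case True
    then show ?thesis by (simp add: a_def)
  next
    case False
    then show ?thesis by (simp add: a_def basis_expansion)
  qed
  have "Dm R u w = (\<chi> k. \<Sum>m\<in>UNIV. a k m)" by (simp add: Dm_def rowsum)
  then have "Fd R u w = (\<Sum>f\<in>{f. \<forall>i. f i \<in> UNIV}. det (\<chi> i. a i (f i)))"
    unfolding Fd_def by (simp only: det_linear_rows_sum[OF finite])
  also have "\<dots> = (\<Sum>f\<in>UNIV. Gc R m0 f w * Fd R u (\<lambda>k. axis (f k) 1))"
  proof (rule sum.cong)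
    fix f :: "'n \<Rightarrow> 'n"
    show "det (\<chi> i. a i (f i)) = Gc R m0 f w * Fd R u (\<lambda>k. axis (f k) 1)"
    proof (cases "\<forall>k\<in>R. f k = m0")
      case False
      then obtain k where k: "k \<in> R" "f k \<noteq> m0" by blast
      have "row k (\<chi> i. a i (f i)) = 0" using k by (simp add: row_def a_def vec_eq_iff)
      then have d0: "det (\<chi> i. a i (f i)) = 0" by (rule det_zero_row(1))
      have "Gc R m0 f w = 0" unfolding Gc_def by (rule if_not_P[OF False])
      then show ?thesis using d0 by simp
    next
      case True
      define cc where "cc i = (if i \<in> R then 1 else w i $ f i)" for i
      have eq: "(\<chi> i. a i (f i)) = (\<chi> i. cc i *s (if i \<in> R then u i else axis (f i) 1))"
        using True by (simp add: a_def cc_def vec_eq_iff)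
      have "det (\<chi> i. a i (f i)) = prod cc UNIV * det (\<chi> i. (if i \<in> R then u i else axis (f i) 1))"
        unfolding eq by (rule det_rows_mul)
      also have "prod cc UNIV = (\<Prod>k\<in>-R. w k $ f k)"
        using prod_split_Compl[of cc R] by (simp add: cc_def)
      finally show ?thesis using True by (simp add: Gc_def Fd_def Dm_def)
    qed
  qed simp
  finally show ?thesis .
qed

definition hS :: "'n set \<Rightarrow> 'n set \<Rightarrow> 'n \<Rightarrow> 'n" where
  "hS R S = (SOME g. bij_betw g (-R) S)"

definition Vv :: "'n::finite set \<Rightarrow> ('n \<Rightarrow> real^'n) \<Rightarrow> real^('n set)" where
  "Vv R u = (\<chi> S. Fd R u (\<lambda>k. axis (hS R S k) 1))"

lemma perm_rel:
  fixes f :: "'n::finite \<Rightarrow> 'n"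
  assumes "inj_on f (-R)"
  shows "\<exists>s::real. \<forall>u. Fd R u (\<lambda>k. axis (f k) 1) = s * Fd R u (\<lambda>k. axis (hS R (f ` (-R)) k) 1)"
proof -
  let ?S = "f ` (-R)"
  let ?h = "hS R ?S"
  have bf: "bij_betw f (-R) ?S" using assms by (simp add: bij_betw_def)
  have hb: "bij_betw ?h (-R) ?S" unfolding hS_def by (rule someI_ex[of "\<lambda>g. bij_betw g (-R) ?S"]) (use bf in blast)
  define p where "p k = (if k \<in> -R then inv_into (-R) f (?h k) else k)" for k
  have "bij_betw (inv_into (-R) f \<circ> ?h) (-R) (-R)"
    by (rule bij_betw_trans[OF hb bij_betw_inv_into[OF bf]])
  then have "bij_betw p (-R) (-R)"
    by (rule bij_betw_cong[THEN iffD1, rotated]) (simp add: p_def)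
  then have "p permutes (-R)" by (rule bij_imp_permutes) (simp add: p_def)
  then have pU: "p permutes UNIV" by (rule permutes_subset) simp
  have hS_in: "?h k \<in> ?S" if "k \<in> -R" for k using hb that by (simp add: bij_betw_def) blast
  have rowsp: "(\<chi> i. Dm R u (\<lambda>k. axis (f k) 1) $ p i) = Dm R u (\<lambda>k. axis (?h k) 1)" for u
  proof -
    have "Dm R u (\<lambda>k. axis (f k) 1) $ p i = Dm R u (\<lambda>k. axis (?h k) 1) $ i" for i
    proof (cases "i \<in> R")
      case True
      then show ?thesis by (simp add: p_def Dm_def)
    next
      case False
      then have "i \<in> -R" by simp
      have hi: "?h i \<in> ?S" using hS_in[OF \<open>i \<in> -R\<close>] .
      have pi: "p i \<in> -R" "f (p i) = ?h i"
        using \<open>i \<in> -R\<close> inv_into_into[OF hi] f_inv_into_f[OF hi] by (simp_all add: p_def)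
      then show ?thesis using False by (simp add: Dm_def)
    qed
    then show ?thesis by (simp add: vec_eq_iff)
  qed
  have "Fd R u (\<lambda>k. axis (f k) 1) = of_int (sign p) * Fd R u (\<lambda>k. axis (?h k) 1)" for u
  proof -
    have "Fd R u (\<lambda>k. axis (?h k) 1) = of_int (sign p) * Fd R u (\<lambda>k. axis (f k) 1)"
      unfolding Fd_def rowsp[symmetric] by (rule det_permute_rows[OF pU])
    moreover have "real_of_int (sign p) * real_of_int (sign p) = 1"
      by (metis of_int_mult of_int_1 sign_idempotent)
    ultimately show ?thesis by (metis mult.assoc mult_1)
  qed
  then show ?thesis by blast
qed

lemma Fd_noninj:
  fixes f :: "'n::finite \<Rightarrow> 'n"
  assumes "\<not> inj_on f (-R)"
  shows "Fd R u (\<lambda>k. axis (f k) 1) = 0"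
proof -
  obtain k1 k2 where k: "k1 \<in> -R" "k2 \<in> -R" "k1 \<noteq> k2" "f k1 = f k2"
    using assms unfolding inj_on_def by blast
  have "row k1 (Dm R u (\<lambda>k. axis (f k) 1)) = row k2 (Dm R u (\<lambda>k. axis (f k) 1))"
    using k by (simp add: row_Dm)
  then show ?thesis unfolding Fd_def by (rule det_identical_rows[OF k(3)])
qed

lemma Vv_comb:
  fixes U :: "nat \<Rightarrow> 'n::finite \<Rightarrow> real^'n"
  assumes "(\<Sum>i\<in>I. c i *\<^sub>R Vv R (U i)) = 0"
  shows "(\<Sum>i\<in>I. c i * Fd R (U i) w) = 0"
proof -
  have inner: "(\<Sum>i\<in>I. c i * Fd R (U i) (\<lambda>k. axis (f k) 1)) = 0" for f :: "'n \<Rightarrow> 'n"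
  proof (cases "inj_on f (-R)")
    case True
    then obtain s where s: "\<And>u. Fd R u (\<lambda>k. axis (f k) 1) = s * Fd R u (\<lambda>k. axis (hS R (f ` (-R)) k) 1)"
      using perm_rel by blast
    have "(\<Sum>i\<in>I. c i * Fd R (U i) (\<lambda>k. axis (f k) 1)) = s * (\<Sum>i\<in>I. c i * Fd R (U i) (\<lambda>k. axis (hS R (f ` (-R)) k) 1))"
      by (simp add: s sum_distrib_left mult_ac)
    also have "(\<Sum>i\<in>I. c i * Fd R (U i) (\<lambda>k. axis (hS R (f ` (-R)) k) 1)) = (\<Sum>i\<in>I. c i *\<^sub>R Vv R (U i)) $ (f ` (-R))"
      by (simp add: Vv_def)
    finally show ?thesis using assms by simp
  next
    case False
    then show ?thesis by (simp add: Fd_noninj)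
  qed
  have "(\<Sum>i\<in>I. c i * Fd R (U i) w) = (\<Sum>i\<in>I. c i * (\<Sum>f\<in>UNIV. Gc R m0 f w * Fd R (U i) (\<lambda>k. axis (f k) 1)))"
    by (simp add: Fd_expand[of R _ w m0])
  also have "\<dots> = (\<Sum>f\<in>UNIV. Gc R m0 f w * (\<Sum>i\<in>I. c i * Fd R (U i) (\<lambda>k. axis (f k) 1)))"
    by (simp add: sum_distrib_left mult_ac sum.swap[of _ I])
  also have "\<dots> = 0" by (simp add: inner)
  finally show ?thesis .
qed


lemma card_set_type: "CARD('n::finite set) = 2 ^ CARD('n)"
proof -
  have "(UNIV :: 'n set set) = Pow UNIV" by simp
  then show ?thesis by (simp add: card_Pow)
qed

lemma tri_zero:
  fixes U W :: "nat \<Rightarrow> 'n::finite \<Rightarrow> real^'n"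
  assumes d: "\<forall>j<m. Fd R (U j) (W j) \<noteq> 0" and t: "\<forall>i j. i < j \<and> j < m \<longrightarrow> Fd R (U i) (W j) = 0"
    and s: "(\<Sum>i\<in>{..<m}. c i *\<^sub>R Vv R (U i)) = 0"
  shows "\<forall>i<m. c i = 0"
proof (rule ccontr)
  assume "\<not> ?thesis"
  then have ne: "{i. i < m \<and> c i \<noteq> 0} \<noteq> {}" by auto
  have fin: "finite {i. i < m \<and> c i \<noteq> 0}" by simp
  define i0 where "i0 = Max {i. i < m \<and> c i \<noteq> 0}"
  have i0: "i0 < m" "c i0 \<noteq> 0" using Max_in[OF fin ne] unfolding i0_def by auto
  have big: "c i = 0" if "i < m" "i0 < i" for i
  proof (rule ccontr)
    assume "c i \<noteq> 0"
    then have "i \<in> {i. i < m \<and> c i \<noteq> 0}" using that by simp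
    then have "i \<le> i0" unfolding i0_def by (rule Max_ge[OF fin])
    then show False using that by simp
  qed
  have z: "(\<Sum>i\<in>{..<m}. c i * Fd R (U i) (W i0)) = 0" by (rule Vv_comb[OF s])
  have "(\<Sum>i\<in>{..<m}. c i * Fd R (U i) (W i0)) = c i0 * Fd R (U i0) (W i0) + (\<Sum>i\<in>{..<m} - {i0}. c i * Fd R (U i) (W i0))"
    by (rule sum.remove) (use i0 in auto)
  also have "(\<Sum>i\<in>{..<m} - {i0}. c i * Fd R (U i) (W i0)) = 0"
  proof (rule sum.neutral, rule ballI)
    fix i assume i: "i \<in> {..<m} - {i0}"
    show "c i * Fd R (U i) (W i0) = 0"
    proof (cases "i < i0")
      case True
      then show ?thesis using t i0 by simp
    next
      case False
      then have "i0 < i" using i by auto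
      then show ?thesis using big i by simp
    qed
  qed
  finally have "c i0 * Fd R (U i0) (W i0) = 0" using z by simp
  then show False using i0 d by simp
qed

lemma tri_count:
  fixes U W :: "nat \<Rightarrow> 'n::finite \<Rightarrow> real^'n"
  assumes d: "\<forall>j<m. Fd R (U j) (W j) \<noteq> 0" and t: "\<forall>i j. i < j \<and> j < m \<longrightarrow> Fd R (U i) (W j) = 0"
  shows "m \<le> 2 ^ CARD('n)"
proof -
  let ?V = "\<lambda>i. Vv R (U i)"
  have inj: "inj_on ?V {..<m}"
  proof (rule inj_onI, rule ccontr)
    fix i j assume i: "i \<in> {..<m}" and j: "j \<in> {..<m}" and eq: "?V i = ?V j" and ij: "i \<noteq> j"
    define c where "c k = (if k = i then 1 else if k = j then -1 else (0::real))" for k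
    have "c k *\<^sub>R ?V k = (if k = i then ?V i else 0) - (if k = j then ?V j else 0)" for k
      using ij by (simp add: c_def)
    then have "(\<Sum>k\<in>{..<m}. c k *\<^sub>R ?V k) = (\<Sum>k\<in>{..<m}. (if k = i then ?V i else 0)) - (\<Sum>k\<in>{..<m}. (if k = j then ?V j else 0))"
      by (simp add: sum_subtractf)
    also have "\<dots> = 0" using i j eq by simp
    finally have "\<forall>k<m. c k = 0" by (rule tri_zero[OF d t])
    then have "c i = 0" using i by simp
    then show False by (simp add: c_def)
  qed
  have indep: "independent (?V ` {..<m})"
  proof
    assume dep: "dependent (?V ` {..<m})"
    have "\<exists>a. (\<exists>v\<in>?V ` {..<m}. a v \<noteq> 0) \<and> (\<Sum>v\<in>?V ` {..<m}. a v *\<^sub>R v) = 0"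
      by (rule dependent_finite[OF finite_imageI[OF finite_lessThan], THEN iffD1, OF dep])
    then obtain a where a: "\<exists>v\<in>?V ` {..<m}. a v \<noteq> 0" "(\<Sum>v\<in>?V ` {..<m}. a v *\<^sub>R v) = 0"
      by (elim exE conjE)
    have "(\<Sum>k\<in>{..<m}. a (?V k) *\<^sub>R ?V k) = 0"
      using a(2) sum.reindex[OF inj, of "\<lambda>v. a v *\<^sub>R v"] by (simp add: comp_def)
    then have "\<forall>k<m. a (?V k) = 0" by (rule tri_zero[OF d t])
    then show False using a(1) by auto
  qed
  have "card (?V ` {..<m}) \<le> DIM(real^('n set))"
    using independent_bound[OF indep] by simp
  moreover have "card (?V ` {..<m}) = m" using card_image[OF inj] by simp
  ultimately show ?thesis by (simp add: card_set_type)
qed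


lemma prod_rank_pair:
  fixes ms :: "(real^'n^'n) list"
  assumes "Suc t < length ms"
  shows "rank (mat_list_prod ms) \<le> rank (ms ! t ** ms ! Suc t)"
proof -
  have d1: "drop t ms = ms ! t # drop (Suc t) ms" using assms by (simp add: Cons_nth_drop_Suc)
  have d2: "drop (Suc t) ms = ms ! Suc t # drop (Suc (Suc t)) ms" using assms by (simp add: Cons_nth_drop_Suc)
  have "ms = take t ms @ drop t ms" by simp
  also have "\<dots> = take t ms @ (ms ! t # ms ! Suc t # drop (Suc (Suc t)) ms)" using d1 d2 by simp
  finally have e: "take t ms @ (ms ! t # ms ! Suc t # drop (Suc (Suc t)) ms) = ms" by simp
  have "mat_list_prod (take t ms @ (ms ! t # ms ! Suc t # drop (Suc (Suc t)) ms)) = mat_list_prod (take t ms) ** ((ms ! t ** ms ! Suc t) ** mat_list_prod (drop (Suc (Suc t)) ms))"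
    by (simp add: mlp_append mlp_Cons matrix_mul_assoc)
  then have "mat_list_prod ms = mat_list_prod (take t ms) ** ((ms ! t ** ms ! Suc t) ** mat_list_prod (drop (Suc (Suc t)) ms))"
    by (simp only: e)
  then have "rank (mat_list_prod ms) \<le> rank ((ms ! t ** ms ! Suc t) ** mat_list_prod (drop (Suc (Suc t)) ms))"
    by (simp only: rank_mul_le_right)
  also have "\<dots> \<le> rank (ms ! t ** ms ! Suc t)" by (rule rank_mul_le_left)
  finally show ?thesis .
qed

lemma subspace_ker: "subspace {x. (B::real^'n^'n) *v x = 0}"
  unfolding subspace_def by (simp add: matrix_vector_right_distrib matrix_vector_mult_scaleR)

theorem mainTheorem2:
  fixes S :: "(real^'n^'n) set" and r :: nat
  assumes "r \<ge> 1"
    and "\<forall>M\<in>S. rank M = r"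
    and "\<exists>N::nat. \<forall>ms. length ms \<ge> N \<and> set ms \<subseteq> S \<longrightarrow> rank (mat_list_prod ms) \<le> r - 1"
  shows "\<forall>ms. length ms = 2 ^ (CARD('n) + 1) \<and> set ms \<subseteq> S \<longrightarrow> rank (mat_list_prod ms) \<le> r - 1"
proof (intro allI impI)
  fix ms :: "(real^'n^'n) list"
  assume h: "length ms = 2 ^ (CARD('n) + 1) \<and> set ms \<subseteq> S"
  obtain N where N: "\<forall>ms. length ms \<ge> N \<and> set ms \<subseteq> S \<longrightarrow> rank (mat_list_prod ms) \<le> r - 1"
    using assms(3) by blast
  define L where "L = length ms"
  define M where "M t = ms ! t" for t
  have MS: "M t \<in> S" if "t < L" for t using h that unfolding M_def L_def by auto
  have rM: "rank (M t) = r" if "t < L" for t using MS[OF that] assms(2) by blast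
  show "rank (mat_list_prod ms) \<le> r - 1"
  proof (rule ccontr)
    assume "\<not> ?thesis"
    then have big: "rank (mat_list_prod ms) \<ge> r" by simp
    have edge: "rank (M t ** M (Suc t)) \<ge> r" if "Suc t < L" for t
      using prod_rank_pair[of t ms] that big unfolding M_def L_def by linarith
    have nb: "rank (M j ** M i) < r" if ij: "i \<le> j" "j < L" for i j
    proof (rule ccontr)
      assume "\<not> ?thesis"
      then have bk: "rank (M j ** M i) \<ge> r" by simp
      define p where "p = Suc j - i"
      have p0: "0 < p" using ij by (simp add: p_def)
      have pi: "p + i = Suc j" using ij by (simp add: p_def)
      have ip: "i + t mod p \<le> j" for t
      proof -
        have "t mod p < p" using p0 by simp
        then show ?thesis using pi by linarith
      qed
      define a where "a t = M (i + t mod p)" for t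
      define K where "K = max N 1"
      have ra: "\<forall>t<K. rank (a t) = r"
      proof (intro allI impI)
        fix t
        have "i + t mod p < L" using ip[of t] ij by linarith
        then show "rank (a t) = r" unfolding a_def by (rule rM)
      qed
      have ea: "\<forall>t. Suc t < K \<longrightarrow> rank (a t ** a (Suc t)) \<ge> r"
      proof (intro allI impI)
        fix t
        have lt: "t mod p < p" using p0 by simp
        show "rank (a t ** a (Suc t)) \<ge> r"
        proof (cases "Suc (t mod p) = p")
          case True
          then have "Suc t mod p = 0" by (simp add: mod_Suc)
          moreover have "i + t mod p = j" using True pi by linarith
          ultimately show ?thesis using bk by (simp add: a_def)
        next
          case False
          then have "Suc t mod p = Suc (t mod p)" by (simp add: mod_Suc)
          moreover have "Suc (i + t mod p) < L" using False lt ij pi by linarith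
          ultimately show ?thesis using edge[of "i + t mod p"] by (simp add: a_def)
        qed
      qed
      have "rank (mat_list_prod (map a [0..<K])) = r"
        by (rule chain_rank[OF ra ea]) (simp add: K_def)
      moreover have "set (map a [0..<K]) \<subseteq> S"
      proof
        fix x assume "x \<in> set (map a [0..<K])"
        then obtain t where "x = a t" by auto
        have "i + t mod p < L" using ip[of t] ij by linarith
        then show "x \<in> S" using MS \<open>x = a t\<close> by (simp add: a_def)
      qed
      moreover have "length (map a [0..<K]) \<ge> N" by (simp add: K_def)
      moreover have "length (map a [0..<K]) \<ge> N \<and> set (map a [0..<K]) \<subseteq> S \<longrightarrow> rank (mat_list_prod (map a [0..<K])) \<le> r - 1"
        using N by (rule allE)
      ultimately have "r \<le> r - 1" by simp
      then show False using assms(1) by simp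
    qed
    have L0: "0 < L" using h by (simp add: L_def)
    have rn: "r \<le> CARD('n)" using rM[OF L0] rank_bound[of "M 0"] by simp
    obtain R :: "'n set" where R: "card R = r"
      using obtain_subset_with_card_n[of r "UNIV :: 'n set"] rn by auto
    have cR: "card (- R) = CARD('n) - r"
      using R by (simp add: Compl_eq_Diff_UNIV card_Diff_subset)
    have "\<forall>t. \<exists>u. t < L \<longrightarrow> inj_on u R \<and> independent (u ` R) \<and> span (u ` R) = range ((*v) (M t))"
    proof (intro allI)
      fix t
      show "\<exists>u. t < L \<longrightarrow> inj_on u R \<and> independent (u ` R) \<and> span (u ` R) = range ((*v) (M t))"
      proof (cases "t < L")
        case True
        have "card R = dim (range ((*v) (M t)))" using rM[OF True] R by (simp add: rank_dim_range)
        then obtain u where "inj_on u R" "independent (u ` R)" "span (u ` R) = range ((*v) (M t))"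
          by (rule basis_indexed[OF subspace_range finite])
        then show ?thesis by blast
      qed simp
    qed
    then have "\<exists>U. \<forall>t. t < L \<longrightarrow> inj_on (U t) R \<and> independent (U t ` R) \<and> span (U t ` R) = range ((*v) (M t))" by (rule choice)
    then obtain U where U0: "\<forall>t. t < L \<longrightarrow> inj_on (U t) R \<and> independent (U t ` R) \<and> span (U t ` R) = range ((*v) (M t))"
      by (elim exE)
    have U: "\<And>t. t < L \<Longrightarrow> inj_on (U t) R \<and> independent (U t ` R) \<and> span (U t ` R) = range ((*v) (M t))"
      using U0 by blast
    have "\<forall>t. \<exists>w. t < L \<longrightarrow> inj_on w (-R) \<and> independent (w ` (-R)) \<and> span (w ` (-R)) = {x. M t *v x = 0}"
    proof (intro allI)
      fix t
      show "\<exists>w. t < L \<longrightarrow> inj_on w (-R) \<and> independent (w ` (-R)) \<and> span (w ` (-R)) = {x. M t *v x = 0}"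
      proof (cases "t < L")
        case True
        have "card (-R) = dim {x. M t *v x = 0}" using rM[OF True] cR by (simp add: ker_dim)
        then obtain w where "inj_on w (-R)" "independent (w ` (-R))" "span (w ` (-R)) = {x. M t *v x = 0}"
          by (rule basis_indexed[OF subspace_ker finite])
        then show ?thesis by blast
      qed simp
    qed
    then have "\<exists>W. \<forall>t. t < L \<longrightarrow> inj_on (W t) (-R) \<and> independent (W t ` (-R)) \<and> span (W t ` (-R)) = {x. M t *v x = 0}" by (rule choice)
    then obtain W where W0: "\<forall>t. t < L \<longrightarrow> inj_on (W t) (-R) \<and> independent (W t ` (-R)) \<and> span (W t ` (-R)) = {x. M t *v x = 0}"
      by (elim exE)
    have W: "\<And>t. t < L \<Longrightarrow> inj_on (W t) (-R) \<and> independent (W t ` (-R)) \<and> span (W t ` (-R)) = {x. M t *v x = 0}"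
      using W0 by blast
    define m where "m = L - 1"
    have d: "\<forall>j<m. Fd R (U (Suc j)) (W j) \<noteq> 0"
    proof (intro allI impI)
      fix j assume j: "j < m"
      then have jL: "Suc j < L" "j < L" by (simp_all add: m_def)
      have c: "\<forall>x\<in>range ((*v) (M (Suc j))). M j *v x = 0 \<longrightarrow> x = 0"
        using rank_crit[OF rM[OF jL(1)], of "M j"] edge[OF jL(1)] by blast
      show "Fd R (U (Suc j)) (W j) \<noteq> 0"
      proof (rule Fd_nz)
        show "inj_on (U (Suc j)) R" "independent (U (Suc j) ` R)" using U[OF jL(1)] by auto
        show "inj_on (W j) (-R)" "independent (W j ` (-R))" using W[OF jL(2)] by auto
        fix x assume "x \<in> span (U (Suc j) ` R)" "x \<in> span (W j ` (-R))"
        then show "x = 0" using U[OF jL(1)] W[OF jL(2)] c by auto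
      qed
    qed
    have t: "\<forall>i j. i < j \<and> j < m \<longrightarrow> Fd R (U (Suc i)) (W j) = 0"
    proof (intro allI impI)
      fix i j assume ij: "i < j \<and> j < m"
      then have jL: "Suc i < L" "j < L" unfolding m_def by arith+
      have "rank (M j ** M (Suc i)) < r" using nb[of "Suc i" j] ij jL by simp
      then have "\<not> (\<forall>x\<in>range ((*v) (M (Suc i))). M j *v x = 0 \<longrightarrow> x = 0)"
        using rank_crit[OF rM[OF jL(1)], of "M j"] by simp
      then obtain x where x: "x \<in> range ((*v) (M (Suc i)))" "M j *v x = 0" "x \<noteq> 0" by blast
      show "Fd R (U (Suc i)) (W j) = 0"
      proof (rule Fd_zero)
        show "inj_on (U (Suc i)) R" using U[OF jL(1)] by auto
        show "inj_on (W j) (-R)" using W[OF jL(2)] by auto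
        show "x \<noteq> 0" by fact
        show "x \<in> span (U (Suc i) ` R)" using U[OF jL(1)] x by auto
        show "x \<in> span (W j ` (-R))" using W[OF jL(2)] x by auto
      qed
    qed
    have "m \<le> 2 ^ CARD('n)" by (rule tri_count[OF d t])
    moreover have "m = 2 * 2 ^ CARD('n) - 1" using h by (simp add: m_def L_def)
    moreover have "(2::nat) \<le> 2 ^ CARD('n)" using power_increasing[of 1 "CARD('n)" "2::nat"] by simp
    ultimately show False by linarith
  qed
qed

end
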